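(* Let $A\in\mathbb{R}^{n\times d}$ have rows $a_1^\top,\dots,a_n^\top$, let $f_1,\dots,f_n:\mathbb{R}\to\mathbb{R}$ be convex and $(1/\gamma)$-smooth ($\gamma>0$), let $g:\mathbb{R}^d\to\mathbb{R}\cup\{+\infty\}$ be closed and $\mu$-strongly convex ($\mu>0$), and write $f^*(y)=\frac1n\sum_{i=1}^nf_i^*(y_i)$ for $y\in\mathbb{R}^n$. For the iterates of the SDAPD method (described in the context), for every $t\ge0$ and every $y\in\mathbb{R}^n$, $$\frac{1}{2\tau}\mathbb{E}_{\mathcal{F}_t}\Big[\Big(1+\frac{(n-1)\gamma\tau}{n}\Big)\|y^t-y\|_2^2-(1+\gamma\tau)\|y^{t+1}-y\|_2^2-\|y^{t+1}-y^t\|_2^2\Big]\ge\mathbb{E}_{\mathcal{F}_t}\Big[-\frac1n\langle\bar{y}^{t+1}-y,A\bar{x}^{t+1}\rangle+nf^*(y^{t+1})-(n-1)f^*(y^t)-f^*(y)\Big].$$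
   Context: $f_i^*$ is the convex conjugate of $f_i$; $\operatorname{prox}_h(u)=\arg\min_v\{h(v)+\frac12\|v-u\|_2^2\}$. SDAPD method: given $x^0\in\mathbb{R}^d$, $y^0\in\mathbb{R}^n$, $\eta,\tau>0$, $\beta_t>0$, set $B_t=\sum_{k=0}^t\beta_k$. For $t=0,1,\dots$: sample $i_t$ uniformly from $\{1,\dots,n\}$ independently of the past; $\bar{x}^{t+1}=\operatorname{prox}_{\eta g}(x^t-\frac{\eta}{n}A^\top y^t)$; $y^{t+1}_i=\operatorname{prox}_{\tau f_i^*}(y_i^t+\tau\langle a_i,\bar{x}^{t+1}\rangle)$ if $i=i_t$, $y^{t+1}_i=y^t_i$ otherwise; $\bar{y}^{t+1}=y^t+n(y^{t+1}-y^t)$; $x^{t+1}=\operatorname{prox}_{B_tg}(x^0-\sum_{k=0}^t\frac{\beta_k}{n}A^\top\bar{y}^{k+1})$. $\mathcal{F}_t$ is the $\sigma$-field generated by all random variables up to iteration $t$ (so $x^t,y^t,\bar x^{t+1}$ are determined given $\mathcal{F}_t$ and $i_t$ is independent of $\mathcal{F}_t$), and $\mathbb{E}_{\mathcal{F}_t}$ is conditional expectation given $\mathcal{F}_t$. *)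

theory Defs
  imports "HOL-Analysis.Analysis"
begin

definition conj_fun :: "(real \<Rightarrow> real) \<Rightarrow> real \<Rightarrow> ereal" where
  "conj_fun f s = (SUP x. ereal (s * x - f x))"

definition prox :: "('a::real_normed_vector \<Rightarrow> ereal) \<Rightarrow> 'a \<Rightarrow> 'a" where
  "prox h u = (SOME v. \<forall>w. h v + ereal ((1/2) * (norm (v - u))\<^sup>2)
                          \<le> h w + ereal ((1/2) * (norm (w - u))\<^sup>2))"

definition smooth_with :: "real \<Rightarrow> (real \<Rightarrow> real) \<Rightarrow> bool" where
  "smooth_with L f \<longleftrightarrow> (\<forall>x. f differentiable (at x)) \<and>
     (\<forall>x y. \<bar>deriv f x - deriv f y\<bar> \<le> L * \<bar>x - y\<bar>)"

definition closed_fun :: "('a::topological_space \<Rightarrow> ereal) \<Rightarrow> bool" where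
  "closed_fun g \<longleftrightarrow> closed {(x, r::real). g x \<le> ereal r}"

definition strongly_convex :: "real \<Rightarrow> ('a::real_normed_vector \<Rightarrow> ereal) \<Rightarrow> bool" where
  "strongly_convex mu g \<longleftrightarrow> (\<forall>x z l. 0 < l \<and> l < 1 \<longrightarrow>
     g (l *\<^sub>R x + (1 - l) *\<^sub>R z) \<le>
       ereal l * g x + ereal (1 - l) * g z - ereal (mu / 2 * l * (1 - l) * (norm (x - z))\<^sup>2))"

definition fstar :: "('n::finite \<Rightarrow> real \<Rightarrow> real) \<Rightarrow> real^'n \<Rightarrow> ereal" where
  "fstar f y = ereal (1 / real CARD('n)) * (\<Sum>i\<in>UNIV. conj_fun (f i) (y $ i))"

text \<open>SDAPD. The sampled indices are given as a sequence om :: nat => 'n (om t = i_t).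
  The state after t iterations is (x^t, y^t, S_t) with S_t = sum_{k<t} beta_k ybar^{k+1}.\<close>

definition sdapd_xbar ::
  "real^'d^'n::finite \<Rightarrow> (real^'d \<Rightarrow> ereal) \<Rightarrow> real \<Rightarrow> real^'d \<Rightarrow> real^'n \<Rightarrow> real^'d" where
  "sdapd_xbar A g eta x y =
     prox (\<lambda>v. ereal eta * g v) (x - (eta / real CARD('n)) *\<^sub>R (transpose A *v y))"

definition sdapd_ynew ::
  "real^'d^'n::finite \<Rightarrow> ('n \<Rightarrow> real \<Rightarrow> real) \<Rightarrow> real \<Rightarrow> real^'n \<Rightarrow> real^'d \<Rightarrow> 'n \<Rightarrow> real^'n" where
  "sdapd_ynew A f tau y xb j =
     (\<chi> i. if i = j then prox (\<lambda>v. ereal tau * conj_fun (f i) v) (y $ i + tau * ((A $ i) \<bullet> xb))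
           else y $ i)"

fun sdapd ::
  "real^'d^'n::finite \<Rightarrow> (real^'d \<Rightarrow> ereal) \<Rightarrow> ('n \<Rightarrow> real \<Rightarrow> real) \<Rightarrow> real \<Rightarrow> real \<Rightarrow>
   (nat \<Rightarrow> real) \<Rightarrow> real^'d \<Rightarrow> real^'n \<Rightarrow> (nat \<Rightarrow> 'n) \<Rightarrow> nat \<Rightarrow>
   (real^'d) \<times> (real^'n) \<times> (real^'n)" where
  "sdapd A g f eta tau beta x0 y0 om 0 = (x0, y0, 0)"
| "sdapd A g f eta tau beta x0 y0 om (Suc t) =
     (let (x, y, s) = sdapd A g f eta tau beta x0 y0 om t;
          xb = sdapd_xbar A g eta x y;
          y' = sdapd_ynew A f tau y xb (om t);
          yb = y + real CARD('n) *\<^sub>R (y' - y);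
          s' = s + beta t *\<^sub>R yb
      in (prox (\<lambda>v. ereal (\<Sum>k\<le>t. beta k) * g v)
               (x0 - (1 / real CARD('n)) *\<^sub>R (transpose A *v s')), y', s'))"

text \<open>x^t, y^t, xbar^{t+1}, ybar^{t+1} along the index sequence om.\<close>
definition sd_x where "sd_x A g f eta tau beta x0 y0 om t = fst (sdapd A g f eta tau beta x0 y0 om t)"
definition sd_y where "sd_y A g f eta tau beta x0 y0 om t = fst (snd (sdapd A g f eta tau beta x0 y0 om t))"
definition sd_xbar where "sd_xbar A g f eta tau beta x0 y0 om t =
  sdapd_xbar A g eta (sd_x A g f eta tau beta x0 y0 om t) (sd_y A g f eta tau beta x0 y0 om t)"
definition sd_ybar where "sd_ybar A g f eta tau beta x0 y0 om t =
  sd_y A g f eta tau beta x0 y0 om t + real CARD('n) *\<^sub>R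
    (sd_y A g f eta tau beta x0 y0 om (Suc t) - (sd_y A g f eta tau beta x0 y0 om t :: real^'n::finite))"

end

theory Submission
  imports Defs
begin


lemma tangent:
  assumes "convex_on UNIV f" "f differentiable (at x)"
  shows "f x + deriv f x * (z - x) \<le> f z"
proof -
  have d: "(f has_field_derivative deriv f x) (at x within UNIV)"
    using assms(2) DERIV_deriv_iff_real_differentiable by auto
  have "f z - f x \<ge> deriv f x * (z - x)"
    by (rule convex_on_imp_above_tangent[OF assms(1) connected_UNIV _ _ d]) auto
  then show ?thesis by simp
qed

lemma descent:
  assumes sm: "smooth_with L f"
  shows "f z \<le> f x + deriv f x * (z - x) + L / 2 * (z - x)^2"
proof -
  define d where "d = z - x"
  define h where "h s = f (x + s * d) - s * deriv f x * d - L / 2 * s^2 * d^2" for s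
  have dif: "\<And>w. f differentiable (at w)" and lip: "\<And>a b. \<bar>deriv f a - deriv f b\<bar> \<le> L * \<bar>a - b\<bar>"
    using sm unfolding smooth_with_def by auto
  have "h 1 \<le> h 0"
  proof (rule DERIV_nonpos_imp_nonincreasing[of 0 1 h])
    fix s :: real assume s: "0 \<le> s" "s \<le> 1"
    have df: "(f has_real_derivative deriv f (x + s * d)) (at (x + s * d))"
      using dif DERIV_deriv_iff_real_differentiable by blast
    have "((\<lambda>s. x + s * d) has_real_derivative d) (at s)"
      by (auto intro!: derivative_eq_intros)
    then have "((\<lambda>s. f (x + s * d)) has_real_derivative deriv f (x + s * d) * d) (at s)"
      using DERIV_chain2[where g="\<lambda>s. x + s * d" and x=s, OF df] by simp
    then have "(h has_real_derivative (deriv f (x + s * d) * d - deriv f x * d - L / 2 * (2 * s) * d^2)) (at s)"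
      unfolding h_def by (auto intro!: derivative_eq_intros)
    moreover have "deriv f (x + s * d) * d - deriv f x * d - L / 2 * (2 * s) * d^2 \<le> 0"
    proof -
      have "(deriv f (x + s * d) - deriv f x) * d \<le> \<bar>deriv f (x + s * d) - deriv f x\<bar> * \<bar>d\<bar>"
        by (metis abs_ge_self abs_mult)
      also have "\<dots> \<le> L * \<bar>s * d\<bar> * \<bar>d\<bar>"
        using lip[of "x + s * d" x] by (simp add: mult_right_mono)
      also have "\<dots> = L * s * d^2" using s by (simp add: abs_mult power2_eq_square)
      finally show ?thesis by (simp add: algebra_simps)
    qed
    ultimately show "\<exists>y. (h has_real_derivative y) (at s) \<and> y \<le> 0" by blast
  qed simp
  then show ?thesis unfolding h_def d_def by (simp add: algebra_simps)
qed

lemma conj_not_minf: "conj_fun f s \<noteq> -\<infinity>"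
proof -
  have "ereal (s * 0 - f 0) \<le> conj_fun f s" unfolding conj_fun_def by (rule SUP_upper) auto
  then show ?thesis by auto
qed

lemma conj_at_deriv:
  assumes "convex_on UNIV f" "f differentiable (at x)"
  shows "conj_fun f (deriv f x) = ereal (deriv f x * x - f x)"
  unfolding conj_fun_def
proof (rule antisym)
  show "(SUP z. ereal (deriv f x * z - f z)) \<le> ereal (deriv f x * x - f x)"
    using tangent[OF assms] by (intro SUP_least) (auto simp: algebra_simps)
  show "ereal (deriv f x * x - f x) \<le> (SUP z. ereal (deriv f x * z - f z))"
    by (rule SUP_upper) auto
qed

lemma conj_sc:
  assumes "convex_on UNIV f" "smooth_with (1/gamma) f" "gamma > 0"
  shows "ereal (deriv f x * x - f x + x * (w - deriv f x) + gamma / 2 * (w - deriv f x)^2) \<le> conj_fun f w"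
proof -
  define v where "v = deriv f x"
  define z where "z = x + gamma * (w - v)"
  have "f z \<le> f x + v * (z - x) + (1/gamma) / 2 * (z - x)^2"
    using descent[OF assms(2)] unfolding v_def by blast
  also have "(1/gamma) / 2 * (z - x)^2 = gamma / 2 * (w - v)^2"
    using assms(3) unfolding z_def by (simp add: power2_eq_square field_simps)
  finally have "v * x - f x + x * (w - v) + gamma / 2 * (w - v)^2 \<le> w * z - f z"
    unfolding z_def by (simp add: algebra_simps power2_eq_square)
  also have "ereal (w * z - f z) \<le> conj_fun f w" unfolding conj_fun_def by (rule SUP_upper) auto
  finally show ?thesis unfolding v_def by simp
qed



lemma deriv_mono:
  assumes "convex_on UNIV f" "\<And>w. f differentiable (at w)" "a \<le> b"
  shows "deriv f a \<le> deriv f b"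
proof -
  have "f a + deriv f a * (b - a) \<le> f b" "f b + deriv f b * (a - b) \<le> f a"
    using tangent[OF assms(1) assms(2)] by auto
  then have "(deriv f b - deriv f a) * (b - a) \<ge> 0" by (simp add: algebra_simps)
  show ?thesis
  proof (cases "a = b")
    case False
    then have "b - a > 0" using assms(3) by simp
    then show ?thesis using \<open>(deriv f b - deriv f a) * (b - a) \<ge> 0\<close>
      by (simp add: zero_le_mult_iff)
  qed simp
qed

lemma deriv_isCont:
  assumes "smooth_with L f"
  shows "isCont (deriv f) x"
proof -
  have lip: "\<And>a b. \<bar>deriv f a - deriv f b\<bar> \<le> L * \<bar>a - b\<bar>" using assms unfolding smooth_with_def by auto
  have L0: "0 \<le> L" using lip[of 1 0] by simp
  have "(L)-lipschitz_on UNIV (deriv f)"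
    by (rule lipschitz_onI) (use lip L0 in \<open>auto simp: dist_real_def\<close>)
  then have "continuous_on UNIV (deriv f)" by (rule lipschitz_on_continuous_on)
  then show ?thesis by (simp add: continuous_on_eq_continuous_at)
qed

lemma solve_eq:
  assumes cv: "convex_on UNIV f" and sm: "smooth_with L f" and tau: "tau > 0"
  shows "\<exists>x. deriv f x + tau * x = u"
proof -
  have dif: "\<And>w. f differentiable (at w)" using sm unfolding smooth_with_def by auto
  define h where "h x = deriv f x + tau * x" for x
  have ct: "\<And>x. isCont h x" unfolding h_def using deriv_isCont[OF sm] by (auto intro!: continuous_intros)
  define a where "a = (u - h 0) / tau"
  have ha: "tau * a = u - h 0" unfolding a_def using tau by simp
  show ?thesis
  proof (cases "u \<ge> h 0")
    case True
    then have a0: "a \<ge> 0" unfolding a_def using tau by simp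
    have "deriv f 0 \<le> deriv f a" using deriv_mono[OF cv dif a0] .
    then have "u \<le> h a" using ha unfolding h_def by simp
    from IVT[of h 0 u a, OF True this a0] ct obtain x where "h x = u" by blast
    then show ?thesis unfolding h_def by blast
  next
    case False
    then have a0: "a \<le> 0" unfolding a_def using tau by (simp add: divide_nonpos_pos)
    have "deriv f a \<le> deriv f 0" using deriv_mono[OF cv dif a0] .
    then have "h a \<le> u" using ha unfolding h_def by simp
    from IVT[of h a u 0, OF this _ a0] False ct obtain x where "h x = u" by force
    then show ?thesis unfolding h_def by blast
  qed
qed

lemma prox_conj:
  fixes u :: real
  assumes cv: "convex_on UNIV f" and sm: "smooth_with (1/gamma) f" and gam: "gamma > 0" and tau: "tau > 0"
  defines "p \<equiv> prox (\<lambda>v. ereal tau * conj_fun f v) u"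
  shows "conj_fun f p \<noteq> \<infinity>"
    and "\<And>w. ereal tau * conj_fun f p + ereal (1/2 * (p - u)^2 + (1 + gamma * tau) / 2 * (w - p)^2)
             \<le> ereal tau * conj_fun f w + ereal (1/2 * (w - u)^2)"
proof -
  have dif: "\<And>w. f differentiable (at w)" using sm unfolding smooth_with_def by auto
  obtain x where hx: "deriv f x + tau * x = u" using solve_eq[OF cv sm tau] by blast
  define v where "v = deriv f x"
  define C where "C = v * x - f x"
  have Cv: "conj_fun f v = ereal C" unfolding C_def v_def using conj_at_deriv[OF cv dif] .
  have K: "ereal (tau * C + 1/2 * (v - u)^2 + (1 + gamma * tau) / 2 * (w - v)^2)
             \<le> ereal tau * conj_fun f w + ereal (1/2 * (w - u)^2)" for w
  proof -
    have "ereal (C + x * (w - v) + gamma / 2 * (w - v)^2) \<le> conj_fun f w"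
      using conj_sc[OF cv sm gam, of x w] unfolding C_def v_def by simp
    then have "ereal tau * ereal (C + x * (w - v) + gamma / 2 * (w - v)^2) \<le> ereal tau * conj_fun f w"
      using tau by (intro ereal_mult_left_mono) auto
    then have "ereal (tau * (C + x * (w - v) + gamma / 2 * (w - v)^2)) + ereal (1/2 * (w - u)^2)
           \<le> ereal tau * conj_fun f w + ereal (1/2 * (w - u)^2)"
      by (intro add_right_mono) simp
    moreover have "tau * (C + x * (w - v) + gamma / 2 * (w - v)^2) + 1/2 * (w - u)^2
        = tau * C + 1/2 * (v - u)^2 + (1 + gamma * tau) / 2 * (w - v)^2"
    proof -
      have "tau * x = u - v" using hx unfolding v_def by simp
      then have "tau * (x * (w - v)) = (u - v) * (w - v)" by (metis mult.assoc mult.commute)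
      then have E: "tau * (C + x * (w - v) + gamma / 2 * (w - v)^2) = tau * C + (u - v) * (w - v) + tau * gamma / 2 * (w - v)^2"
        by (simp only: distrib_left) (simp add: algebra_simps)
      show ?thesis by (subst E) (simp add: field_simps power2_eq_square)
    qed
    ultimately show ?thesis by simp
  qed
  define Phi where "Phi w = ereal tau * conj_fun f w + ereal (1/2 * (w - u)^2)" for w
  have minv: "\<forall>w. Phi v \<le> Phi w"
  proof
    fix w
    have "Phi v = ereal (tau * C + 1/2 * (v - u)^2)" unfolding Phi_def Cv by simp
    also have "\<dots> \<le> ereal (tau * C + 1/2 * (v - u)^2 + (1 + gamma * tau) / 2 * (w - v)^2)"
      using gam tau by simp
    also have "\<dots> \<le> Phi w" unfolding Phi_def by (rule K)
    finally show "Phi v \<le> Phi w" .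
  qed
  have pdef: "p = (SOME v. \<forall>w. Phi v \<le> Phi w)"
    unfolding p_def prox_def Phi_def by simp
  have minp: "\<forall>w. Phi p \<le> Phi w" unfolding pdef by (rule someI[of _ v]) (rule minv)
  have "ereal (tau * C + 1/2 * (v - u)^2 + (1 + gamma * tau) / 2 * (p - v)^2) \<le> Phi p"
    unfolding Phi_def by (rule K)
  also have "\<dots> \<le> Phi v" using minp by blast
  also have "Phi v = ereal (tau * C + 1/2 * (v - u)^2)" unfolding Phi_def Cv by simp
  finally have "(1 + gamma * tau) / 2 * (p - v)^2 \<le> 0" by simp
  moreover have "(1 + gamma * tau) / 2 > 0" using gam tau by (simp add: add_pos_pos)
  ultimately have "(p - v)^2 \<le> 0" by (simp add: mult_le_0_iff)
  then have pv: "p = v" by simp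
  show "conj_fun f p \<noteq> \<infinity>" using pv Cv by simp
  show "ereal tau * conj_fun f p + ereal (1/2 * (p - u)^2 + (1 + gamma * tau) / 2 * (w - p)^2)
             \<le> ereal tau * conj_fun f w + ereal (1/2 * (w - u)^2)" for w
    using K[of w] pv Cv by (simp add: add.assoc)
qed



lemma sdapd_agree:
  "(\<forall>k<t. om' k = om k) \<Longrightarrow> sdapd A g f eta tau beta x0 y0 om' t = sdapd A g f eta tau beta x0 y0 om t"
  by (induction t) (auto simp: Let_def split: prod.splits)

lemma sd_y_upd: "sd_y A g f eta tau beta x0 y0 (om(t := j)) t = sd_y A g f eta tau beta x0 y0 om t"
  unfolding sd_y_def by (subst sdapd_agree[of t "om(t:=j)" om]) auto

lemma sd_x_upd: "sd_x A g f eta tau beta x0 y0 (om(t := j)) t = sd_x A g f eta tau beta x0 y0 om t"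
  unfolding sd_x_def by (subst sdapd_agree[of t "om(t:=j)" om]) auto

lemma sd_xbar_upd: "sd_xbar A g f eta tau beta x0 y0 (om(t := j)) t = sd_xbar A g f eta tau beta x0 y0 om t"
  unfolding sd_xbar_def sd_x_upd sd_y_upd ..

lemma sd_y_Suc: "sd_y A g f eta tau beta x0 y0 om (Suc t) =
   sdapd_ynew A f tau (sd_y A g f eta tau beta x0 y0 om t) (sd_xbar A g f eta tau beta x0 y0 om t) (om t)"
  unfolding sd_y_def sd_xbar_def sd_x_def by (auto simp: Let_def split: prod.splits)

lemma sd_y_upd_Suc: "sd_y A g f eta tau beta x0 y0 (om(t := j)) (Suc t) =
   sdapd_ynew A f tau (sd_y A g f eta tau beta x0 y0 om t) (sd_xbar A g f eta tau beta x0 y0 om t) j"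
  unfolding sd_y_Suc sd_y_upd sd_xbar_upd by simp

lemma sd_y_fin:
  assumes cv: "\<And>i. convex_on UNIV (f i)" and sm: "\<And>i. smooth_with (1/gamma) (f i)"
    and gam: "gamma > 0" and tau: "tau > 0" and y0: "\<And>i. conj_fun (f i) (y0 $ i) \<noteq> \<infinity>"
  shows "conj_fun (f i) (sd_y A g f eta tau beta x0 y0 om t $ i) \<noteq> \<infinity>"
proof (induction t arbitrary: i)
  case 0
  then show ?case using y0 by (simp add: sd_y_def)
next
  case (Suc t)
  show ?case
  proof (cases "i = om t")
    case True
    then show ?thesis unfolding sd_y_Suc sdapd_ynew_def
      using prox_conj(1)[OF cv sm gam tau] by simp
  next
    case False
    then show ?thesis unfolding sd_y_Suc sdapd_ynew_def using Suc by simp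
  qed
qed

lemma sum_if_single:
  fixes a b :: "'a::finite \<Rightarrow> real"
  shows "(\<Sum>i\<in>UNIV. if i = j then a i else b i) = (\<Sum>i\<in>UNIV. b i) - b j + a j"
proof -
  have "(\<Sum>i\<in>UNIV. if i = j then a i else b i) = (\<Sum>i\<in>UNIV. b i + (if i = j then a i - b i else 0))"
    by (rule sum.cong) auto
  also have "\<dots> = (\<Sum>i\<in>UNIV. b i) + (a j - b j)" by (simp add: sum.distrib)
  finally show ?thesis by simp
qed

lemma norm_sq_vec: "(norm (z::real^'n))^2 = (\<Sum>i\<in>UNIV. (z $ i)^2)"
  by (subst power2_norm_eq_inner) (simp add: inner_vec_def power2_eq_square)

lemma fstar_real:
  assumes "\<And>i. conj_fun (f i) (z $ i) \<noteq> \<infinity>"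
  shows "fstar f z = ereal (1 / real CARD('n) * (\<Sum>i\<in>UNIV. real_of_ereal (conj_fun (f i) ((z::real^'n::finite) $ i))))"
proof -
  have e: "ereal (real_of_ereal (conj_fun (f i) (z $ i))) = conj_fun (f i) (z $ i)" for i
    using assms[of i] conj_not_minf[of "f i" "z $ i"] by (cases "conj_fun (f i) (z $ i)") auto
  have "(\<Sum>i\<in>UNIV. conj_fun (f i) (z $ i)) = (\<Sum>i\<in>UNIV. ereal (real_of_ereal (conj_fun (f i) (z $ i))))"
    by (rule sum.cong) (simp_all only: e)
  also have "\<dots> = ereal (\<Sum>i\<in>UNIV. real_of_ereal (conj_fun (f i) (z $ i)))" by (rule sum_ereal)
  finally have "(\<Sum>i\<in>UNIV. conj_fun (f i) (z $ i)) = ereal (\<Sum>i\<in>UNIV. real_of_ereal (conj_fun (f i) (z $ i)))" .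
  then show ?thesis unfolding fstar_def by simp
qed

lemma sum_minf: "(\<Sum>j\<in>(UNIV::'a::finite set). (-\<infinity>::ereal)) = -\<infinity>"
proof -
  have "\<And>A::'a set. finite A \<Longrightarrow> A \<noteq> {} \<Longrightarrow> (\<Sum>j\<in>A. (-\<infinity>::ereal)) = -\<infinity>"
  proof -
    fix A :: "'a set" assume "finite A" "A \<noteq> {}"
    then show "(\<Sum>j\<in>A. (-\<infinity>::ereal)) = -\<infinity>"
      by (induction A rule: finite_ne_induct) auto
  qed
  then show ?thesis by simp
qed



theorem lemma3p4:
  fixes A :: "real^'d^'n::finite"
    and f :: "'n \<Rightarrow> real \<Rightarrow> real"
    and g :: "real^'d \<Rightarrow> ereal"
    and gamma mu eta tau :: real
    and beta :: "nat \<Rightarrow> real"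
    and x0 :: "real^'d" and y0 :: "real^'n"
    and om :: "nat \<Rightarrow> 'n"
    and t :: nat and y :: "real^'n"
  assumes gamma_pos: "gamma > 0"
    and f_convex: "\<And>i. convex_on UNIV (f i)"
    and f_smooth: "\<And>i. smooth_with (1 / gamma) (f i)"
    and mu_pos: "mu > 0"
    and g_closed: "closed_fun g"
    and g_sconvex: "strongly_convex mu g"
    and g_proper: "\<exists>x. g x \<noteq> \<infinity>" "\<And>x. g x \<noteq> -\<infinity>"
    and eta_pos: "eta > 0" and tau_pos: "tau > 0"
    and beta_pos: "\<And>k. beta k > 0"
    and y0_dom: "\<And>i. conj_fun (f i) (y0 $ i) \<noteq> \<infinity>"
  shows
   "ereal (1 / (2 * tau) * ((1 / real CARD('n)) * (\<Sum>j\<in>UNIV.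
        (1 + (real CARD('n) - 1) * gamma * tau / real CARD('n))
           * (norm (sd_y A g f eta tau beta x0 y0 (om(t := j)) t - y))\<^sup>2
      - (1 + gamma * tau) * (norm (sd_y A g f eta tau beta x0 y0 (om(t := j)) (Suc t) - y))\<^sup>2
      - (norm (sd_y A g f eta tau beta x0 y0 (om(t := j)) (Suc t)
               - sd_y A g f eta tau beta x0 y0 (om(t := j)) t))\<^sup>2)))
    \<ge> ereal (1 / real CARD('n)) * (\<Sum>j\<in>UNIV.
        ereal (- (1 / real CARD('n)) * ((sd_ybar A g f eta tau beta x0 y0 (om(t := j)) t - y)
                 \<bullet> (A *v sd_xbar A g f eta tau beta x0 y0 (om(t := j)) t)))
      + ereal (real CARD('n)) * fstar f (sd_y A g f eta tau beta x0 y0 (om(t := j)) (Suc t))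
      - ereal (real CARD('n) - 1) * fstar f (sd_y A g f eta tau beta x0 y0 (om(t := j)) t)
      - fstar f y)"
proof -
  define N where "N = real CARD('n)"
  have N0: "N > 0" unfolding N_def by simp
  define yt where "yt = sd_y A g f eta tau beta x0 y0 om t"
  define xb where "xb = sd_xbar A g f eta tau beta x0 y0 om t"
  define c where "c = A *v xb"
  have Ac: "(A $ i) \<bullet> xb = c $ i" for i
    by (simp add: c_def matrix_vector_mult_def inner_vec_def mult.commute)
  define p where "p i = prox (\<lambda>v. ereal tau * conj_fun (f i) v) (yt $ i + tau * c $ i)" for i
  define Y where "Y j = sdapd_ynew A f tau yt xb j" for j
  have Yc: "Y j $ i = (if i = j then p i else yt $ i)" for i j
    by (simp add: Y_def sdapd_ynew_def p_def Ac)
  have e1: "sd_y A g f eta tau beta x0 y0 (om(t:=j)) t = yt" for j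
    unfolding yt_def by (rule sd_y_upd)
  have e2: "sd_y A g f eta tau beta x0 y0 (om(t:=j)) (Suc t) = Y j" for j
    unfolding Y_def yt_def xb_def by (rule sd_y_upd_Suc)
  have e3: "sd_xbar A g f eta tau beta x0 y0 (om(t:=j)) t = xb" for j
    unfolding xb_def by (rule sd_xbar_upd)
  have e4: "sd_ybar A g f eta tau beta x0 y0 (om(t:=j)) t = yt + N *\<^sub>R (Y j - yt)" for j
    unfolding sd_ybar_def e1 e2 N_def ..
  have fp: "conj_fun (f i) (p i) \<noteq> \<infinity>" for i
    unfolding p_def by (rule prox_conj(1)[OF f_convex f_smooth gamma_pos tau_pos])
  have ft: "conj_fun (f i) (yt $ i) \<noteq> \<infinity>" for i
    unfolding yt_def by (rule sd_y_fin[OF f_convex f_smooth gamma_pos tau_pos y0_dom])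
  have fY: "conj_fun (f i) (Y j $ i) \<noteq> \<infinity>" for i j
    using fp ft by (simp add: Yc)
  define Ft where "Ft i = real_of_ereal (conj_fun (f i) (yt $ i))" for i
  define Fp where "Fp i = real_of_ereal (conj_fun (f i) (p i))" for i
  define St where "St = (\<Sum>i\<in>UNIV. Ft i)"
  have Ft_eq: "conj_fun (f i) (yt $ i) = ereal (Ft i)" for i
    unfolding Ft_def using ft[of i] conj_not_minf[of "f i" "yt $ i"] by (cases "conj_fun (f i) (yt $ i)") auto
  have Fp_eq: "conj_fun (f i) (p i) = ereal (Fp i)" for i
    unfolding Fp_def using fp[of i] conj_not_minf[of "f i" "p i"] by (cases "conj_fun (f i) (p i)") auto
  have fs_yt: "fstar f yt = ereal (1 / N * St)"
    unfolding fstar_real[OF ft] St_def Ft_def N_def ..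
  have fs_Y: "fstar f (Y j) = ereal (1 / N * (St - Ft j + Fp j))" for j
  proof -
    have "(\<Sum>i\<in>UNIV. real_of_ereal (conj_fun (f i) (Y j $ i))) = (\<Sum>i\<in>UNIV. if i = j then Fp i else Ft i)"
      by (rule sum.cong) (auto simp: Yc Fp_def Ft_def)
    also have "\<dots> = St - Ft j + Fp j" unfolding St_def by (rule sum_if_single)
    finally show ?thesis unfolding fstar_real[OF fY] N_def by simp
  qed
  show ?thesis
  proof (cases "\<exists>i. conj_fun (f i) (y $ i) = \<infinity>")
    case True
    have "(\<Sum>i\<in>UNIV. conj_fun (f i) (y $ i)) = \<infinity>" using True by (simp add: sum_Pinfty)
    then have fsy: "fstar f y = \<infinity>" unfolding fstar_def using N0 by (simp add: N_def)
    have "ereal (1 / real CARD('n)) * (\<Sum>j\<in>UNIV.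
        ereal (- (1 / real CARD('n)) * ((sd_ybar A g f eta tau beta x0 y0 (om(t := j)) t - y)
                 \<bullet> (A *v sd_xbar A g f eta tau beta x0 y0 (om(t := j)) t)))
      + ereal (real CARD('n)) * fstar f (sd_y A g f eta tau beta x0 y0 (om(t := j)) (Suc t))
      - ereal (real CARD('n) - 1) * fstar f (sd_y A g f eta tau beta x0 y0 (om(t := j)) t)
      - fstar f y) = ereal (1 / real CARD('n)) * (\<Sum>j\<in>(UNIV::'n set). -\<infinity>)"
      unfolding e1 e2 fs_Y fs_yt fsy by simp
    also have "\<dots> = -\<infinity>" unfolding sum_minf by simp
    finally show ?thesis by simp
  next
    case False
    then have fy: "conj_fun (f i) (y $ i) \<noteq> \<infinity>" for i by blast
    define Fy where "Fy i = real_of_ereal (conj_fun (f i) (y $ i))" for i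
    define Sy where "Sy = (\<Sum>i\<in>UNIV. Fy i)"
    have Fy_eq: "conj_fun (f i) (y $ i) = ereal (Fy i)" for i
      unfolding Fy_def using fy[of i] conj_not_minf[of "f i" "y $ i"] by (cases "conj_fun (f i) (y $ i)") auto
    have fsy: "fstar f y = ereal (1 / N * Sy)"
      unfolding fstar_real[OF fy] Sy_def Fy_def N_def ..
    define R where "R j = - (1 / N) * ((yt + N *\<^sub>R (Y j - yt) - y) \<bullet> c)
        + N * (1 / N * (St - Ft j + Fp j)) - (N - 1) * (1 / N * St) - 1 / N * Sy" for j
    define al where "al = 1 + (N - 1) * gamma * tau / N"
    define L where "L j = al * (norm (yt - y))\<^sup>2 - (1 + gamma * tau) * (norm (Y j - y))\<^sup>2
        - (norm (Y j - yt))\<^sup>2" for j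
    define M where "M j = (y $ j - p j) * c $ j + Fp j - Fy j" for j
    define T where "T j = (y $ j - yt $ j)^2 - (1 + gamma * tau) * (y $ j - p j)^2 - (p j - yt $ j)^2" for j
    have RHS: "ereal (1 / real CARD('n)) * (\<Sum>j\<in>UNIV.
        ereal (- (1 / real CARD('n)) * ((sd_ybar A g f eta tau beta x0 y0 (om(t := j)) t - y)
                 \<bullet> (A *v sd_xbar A g f eta tau beta x0 y0 (om(t := j)) t)))
      + ereal (real CARD('n)) * fstar f (sd_y A g f eta tau beta x0 y0 (om(t := j)) (Suc t))
      - ereal (real CARD('n) - 1) * fstar f (sd_y A g f eta tau beta x0 y0 (om(t := j)) t)
      - fstar f y) = ereal (1 / N * (\<Sum>j\<in>UNIV. R j))"
      unfolding e1 e2 e3 e4 fs_Y fs_yt fsy N_def[symmetric] c_def[symmetric] R_def by simp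
    have LHS: "ereal (1 / (2 * tau) * ((1 / real CARD('n)) * (\<Sum>j\<in>UNIV.
        (1 + (real CARD('n) - 1) * gamma * tau / real CARD('n))
           * (norm (sd_y A g f eta tau beta x0 y0 (om(t := j)) t - y))\<^sup>2
      - (1 + gamma * tau) * (norm (sd_y A g f eta tau beta x0 y0 (om(t := j)) (Suc t) - y))\<^sup>2
      - (norm (sd_y A g f eta tau beta x0 y0 (om(t := j)) (Suc t)
               - sd_y A g f eta tau beta x0 y0 (om(t := j)) t))\<^sup>2)))
      = ereal (1 / (2 * tau) * (1 / N * (\<Sum>j\<in>UNIV. L j)))"
      unfolding e1 e2 N_def[symmetric] L_def al_def ..
    define W where "W = (\<Sum>i\<in>UNIV. (yt $ i - y $ i) * c $ i)"
    have IP: "(yt + N *\<^sub>R (Y j - yt) - y) \<bullet> c = W + N * (p j - yt $ j) * c $ j" for j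
    proof -
      have "(yt + N *\<^sub>R (Y j - yt) - y) \<bullet> c
          = (\<Sum>i\<in>UNIV. (yt $ i - y $ i) * c $ i + (if i = j then N * (p i - yt $ i) * c $ i else 0))"
        unfolding inner_vec_def by (rule sum.cong) (auto simp: Yc algebra_simps)
      also have "\<dots> = W + N * (p j - yt $ j) * c $ j" unfolding W_def by (simp add: sum.distrib)
      finally show ?thesis .
    qed
    have cardN: "real (card (UNIV :: 'n set)) = N" unfolding N_def by simp
    have sumR: "(\<Sum>j\<in>UNIV. R j) = (\<Sum>j\<in>UNIV. M j)"
    proof -
      have "R j = M j + (((yt $ j - y $ j) * c $ j) - W / N) + (St / N - Ft j) + (Fy j - Sy / N)" for j
        unfolding R_def M_def IP using N0 by (simp add: field_simps)
      then have "(\<Sum>j\<in>UNIV. R j) = (\<Sum>j\<in>UNIV. M j) + ((\<Sum>j\<in>UNIV. (yt $ j - y $ j) * c $ j) - N * (W / N))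
          + (N * (St / N) - St) + (Sy - N * (Sy / N))"
        by (simp add: sum.distrib sum_subtractf cardN St_def Sy_def)
      also have "\<dots> = (\<Sum>j\<in>UNIV. M j)" using N0 unfolding W_def by simp
      finally show ?thesis .
    qed
    define D where "D = (\<Sum>i\<in>UNIV. (yt $ i - y $ i)^2)"
    have n1: "(norm (yt - y))\<^sup>2 = D" unfolding norm_sq_vec D_def by simp
    have n2: "(norm (Y j - y))\<^sup>2 = D - (yt $ j - y $ j)^2 + (p j - y $ j)^2" for j
    proof -
      have "(norm (Y j - y))\<^sup>2 = (\<Sum>i\<in>UNIV. if i = j then (p i - y $ i)^2 else (yt $ i - y $ i)^2)"
        unfolding norm_sq_vec by (rule sum.cong) (auto simp: Yc)
      then show ?thesis unfolding D_def sum_if_single by simp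
    qed
    have n3: "(norm (Y j - yt))\<^sup>2 = (p j - yt $ j)^2" for j
    proof -
      have "(norm (Y j - yt))\<^sup>2 = (\<Sum>i\<in>UNIV. if i = j then (p i - yt $ i)^2 else 0)"
        unfolding norm_sq_vec by (rule sum.cong) (auto simp: Yc)
      then show ?thesis by simp
    qed
    have sumL: "(\<Sum>j\<in>UNIV. L j) = (\<Sum>j\<in>UNIV. T j)"
    proof -
      have "L j = T j + ((al - (1 + gamma * tau)) * D + gamma * tau * (yt $ j - y $ j)^2)" for j
        unfolding L_def T_def n1 n2 n3 by (simp add: algebra_simps power2_commute[of "y $ j"])
      then have "(\<Sum>j\<in>UNIV. L j) = (\<Sum>j\<in>UNIV. T j) + (N * ((al - (1 + gamma * tau)) * D) + gamma * tau * D)"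
        by (simp add: sum.distrib cardN D_def sum_distrib_left)
      also have "N * ((al - (1 + gamma * tau)) * D) = - (gamma * tau * D)"
        unfolding al_def using N0 by (simp add: field_simps)
      finally show ?thesis by simp
    qed
    have key: "2 * tau * M j \<le> T j" for j
    proof -
      define u where "u = yt $ j + tau * c $ j"
      have "ereal tau * conj_fun (f j) (p j) + ereal (1/2 * (p j - u)^2 + (1 + gamma * tau) / 2 * (y $ j - p j)^2)
             \<le> ereal tau * conj_fun (f j) (y $ j) + ereal (1/2 * (y $ j - u)^2)"
        unfolding p_def u_def by (rule prox_conj(2)[OF f_convex f_smooth gamma_pos tau_pos])
      then have I: "tau * Fp j + (1/2 * (p j - u)^2 + (1 + gamma * tau) / 2 * (y $ j - p j)^2)
             \<le> tau * Fy j + 1/2 * (y $ j - u)^2"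
        unfolding Fp_eq Fy_eq by simp
      have I2: "0 \<le> 2 * (tau * Fy j + 1/2 * (y $ j - u)^2 - (tau * Fp j + (1/2 * (p j - u)^2 + (1 + gamma * tau) / 2 * (y $ j - p j)^2)))"
        using I by (simp only: diff_ge_0_iff_ge mult_nonneg_nonneg zero_le_numeral)
      have "T j - 2 * tau * M j = 2 * (tau * Fy j + 1/2 * (y $ j - u)^2 - (tau * Fp j + (1/2 * (p j - u)^2 + (1 + gamma * tau) / 2 * (y $ j - p j)^2)))"
        unfolding T_def M_def u_def by (simp add: power2_eq_square field_simps)
      then show ?thesis using I2 by linarith
    qed
    have "2 * tau * (\<Sum>j\<in>UNIV. M j) \<le> (\<Sum>j\<in>UNIV. T j)"
      unfolding sum_distrib_left by (rule sum_mono) (rule key)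
    then have "1 / N * (\<Sum>j\<in>UNIV. M j) \<le> 1 / (2 * tau) * (1 / N * (\<Sum>j\<in>UNIV. T j))"
      using N0 tau_pos by (simp add: field_simps)
    then show ?thesis unfolding RHS LHS sumR sumL by simp
  qed
qed

end
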